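(* Let $\mathbf{F}_{\Phi}$ be a fence over the Cantor space $\mathbf{C}$, where $\Phi=(\varphi^L,\varphi^U)$. (1) If $\mathbf{F}_{\Phi}$ is a Scissorhand fence, then the set $\mathbf{D}_1=\{x\in\mathbf{C} : \mathbf{F}_{\Phi}(x)\text{ is a singleton}\}$ is a dense $G_\delta$ subset of $\mathbf{C}$. (2) If $\mathbf{F}_{\Phi}$ is a two-sided Scissorhand fence, then the set $\mathbf{D}_2=\{(x,y)\in\mathbf{F}_{\Phi} : \mathbf{F}_{\Phi}(x)=\{y\}\}$ is a dense $G_\delta$ subset of $\mathbf{F}_{\Phi}$.
   Context: $\mathbf{C}$ denotes the Cantor space. For $\Phi=(\varphi^L,\varphi^U)$ with $\varphi^L,\varphi^U:\mathbf{C}\to[0,1]$, $\varphi^L$ lower semicontinuous, $\varphi^U$ upper semicontinuous and $\varphi^L\le\varphi^U$, the fence is $\mathbf{F}_{\Phi}=\{(x,t)\in\mathbf{C}\times[0,1]:\varphi^L(x)\le t\le\varphi^U(x)\}$, and for $x\in\mathbf{C}$, $\mathbf{F}_{\Phi}(x)=\{t\in[0,1]:(x,t)\in\mathbf{F}_{\Phi}\}$. A fence $\mathbf{F}_{\Phi}$ is a Scissorhand fence if the graph $\{(x,\varphi^U(x)):x\in\mathbf{C}\}$ is dense in $\mathbf{F}_{\Phi}$ and $\{x\in\mathbf{C}:\varphi^L(x)\neq\varphi^U(x)\}$ is dense in $\mathbf{C}$; it is a two-sided Scissorhand fence if in addition the graph $\{(x,\varphi^L(x)):x\in\mathbf{C}\}$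 is dense in $\mathbf{F}_{\Phi}$. *)

theory Defs
  imports "HOL-Analysis.Analysis"
begin

text \<open>The Cantor space: infinite binary sequences with the product topology
  (the library's product topology on function spaces, bool being discrete).\<close>
type_synonym cantor = "nat \<Rightarrow> bool"

definition lower_semicont :: "('a::topological_space \<Rightarrow> real) \<Rightarrow> bool" where
  "lower_semicont f \<longleftrightarrow> (\<forall>a. open {x. a < f x})"

definition upper_semicont :: "('a::topological_space \<Rightarrow> real) \<Rightarrow> bool" where
  "upper_semicont f \<longleftrightarrow> (\<forall>a. open {x. f x < a})"

definition fence_pair :: "(cantor \<Rightarrow> real) \<Rightarrow> (cantor \<Rightarrow> real) \<Rightarrow> bool" where
  "fence_pair phiL phiU \<longleftrightarrow>
     (\<forall>x. phiL x \<in> {0..1} \<and> phiU x \<in> {0..1}) \<and>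
     lower_semicont phiL \<and> upper_semicont phiU \<and> (\<forall>x. phiL x \<le> phiU x)"

definition fence :: "(cantor \<Rightarrow> real) \<Rightarrow> (cantor \<Rightarrow> real) \<Rightarrow> (cantor \<times> real) set" where
  "fence phiL phiU = {(x, t). t \<in> {0..1} \<and> phiL x \<le> t \<and> t \<le> phiU x}"

definition fence_at :: "(cantor \<Rightarrow> real) \<Rightarrow> (cantor \<Rightarrow> real) \<Rightarrow> cantor \<Rightarrow> real set" where
  "fence_at phiL phiU x = {t \<in> {0..1}. (x, t) \<in> fence phiL phiU}"

definition scissorhand :: "(cantor \<Rightarrow> real) \<Rightarrow> (cantor \<Rightarrow> real) \<Rightarrow> bool" where
  "scissorhand phiL phiU \<longleftrightarrow>
     fence_pair phiL phiU \<and>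
     fence phiL phiU \<subseteq> closure {(x, phiU x) | x. True} \<and>
     closure {x. phiL x \<noteq> phiU x} = UNIV"

definition two_sided_scissorhand :: "(cantor \<Rightarrow> real) \<Rightarrow> (cantor \<Rightarrow> real) \<Rightarrow> bool" where
  "two_sided_scissorhand phiL phiU \<longleftrightarrow>
     scissorhand phiL phiU \<and>
     fence phiL phiU \<subseteq> closure {(x, phiL x) | x. True}"

end

theory Submission
  imports Defs
begin

lemma cantor_compact: "compact_space (euclidean :: cantor topology)"
proof -
  have cb: "compact_space (euclidean :: bool topology)"
    by (simp add: compact_space_def compactin_euclidean_iff finite_imp_compact)
  have "compact_space (product_topology (\<lambda>i::nat. euclidean :: bool topology) UNIV)"
    using cb compact_space_product_topology by blast
  then show ?thesis
    by (simp add: euclidean_product_topology)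
qed

lemma cantor_hausdorff: "Hausdorff_space (euclidean :: cantor topology)"
proof -
  have hb: "Hausdorff_space (euclidean :: bool topology)"
    using Hausdorff_space_compact_sets open_discrete open_openin by blast
  have "Hausdorff_space (product_topology (\<lambda>i::nat. euclidean :: bool topology) UNIV)"
    using hb Hausdorff_space_product_topology by blast
  then show ?thesis
    by (simp add: euclidean_product_topology)
qed

lemma cantor_baire:
  fixes G :: "cantor set set"
  assumes "countable G" "\<And>T. T \<in> G \<Longrightarrow> open T \<and> closure T = UNIV"
  shows "closure (\<Inter>G) = UNIV"
proof -
  have "euclidean closure_of \<Inter>G = topspace (euclidean :: cantor topology)"
  proof (rule Baire_category)
    show "completely_metrizable_space (euclidean :: cantor topology) \<or>
      locally_compact_space (euclidean :: cantor topology) \<and> regular_space (euclidean :: cantor topology)"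
      using cantor_compact cantor_hausdorff compact_imp_locally_compact_space
        compact_Hausdorff_imp_regular_space by blast
  qed (use assms in auto)
  then show ?thesis by simp
qed

lemma closure_meet:
  assumes "p \<in> closure S" "open T" "p \<in> T"
  shows "\<exists>q\<in>S. q \<in> T"
proof -
  have "\<forall>A. \<forall>S'\<subseteq>A. open S' \<longrightarrow> p \<in> S' \<longrightarrow> S \<inter> A \<noteq> {}"
    using assms(1) closure_iff_nhds_not_empty by metis
  then have "T \<subseteq> T \<longrightarrow> open T \<longrightarrow> p \<in> T \<longrightarrow> S \<inter> T \<noteq> {}" by (elim allE[of _ T])
  then have "S \<inter> T \<noteq> {}" using assms(2,3) by simp
  then show ?thesis by blast
qed

lemma fence_at_eq:
  assumes "fence_pair phiL phiU"
  shows "fence_at phiL phiU x = {phiL x .. phiU x}"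
proof -
  have "0 \<le> phiL x" "phiU x \<le> 1" using assms by (auto simp: fence_pair_def)
  then show ?thesis unfolding fence_at_def fence_def by auto
qed

lemma D1_eq:
  assumes "fence_pair phiL phiU"
  shows "{x. \<exists>y. fence_at phiL phiU x = {y}} = {x. phiL x = phiU x}"
  using assms unfolding fence_at_eq[OF assms] fence_pair_def
  by (auto simp: atLeastAtMost_singleton_iff)

lemma open_O:
  assumes "fence_pair phiL phiU"
  shows "open {x. phiU x - phiL x < e}"
proof -
  have "{x. phiU x - phiL x < e} = (\<Union>q. {x. phiU x < q} \<inter> {x. q - e < phiL x})"
  proof (rule set_eqI, rule iffI)
    fix x assume "x \<in> {x. phiU x - phiL x < e}"
    then show "x \<in> (\<Union>q. {x. phiU x < q} \<inter> {x. q - e < phiL x})"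
      by (intro UN_I[of "(phiU x + phiL x + e)/2"]) auto
  qed auto
  moreover have "open ({x. phiU x < q} \<inter> {x. q - e < phiL x})" for q
    using assms unfolding fence_pair_def lower_semicont_def upper_semicont_def by blast
  ultimately show ?thesis by auto
qed

lemma dense_O:
  assumes fp: "fence_pair phiL phiU" and sc: "scissorhand phiL phiU" and e: "e > 0"
    and U: "open U" "x0 \<in> U"
  shows "\<exists>x\<in>U. phiU x - phiL x < e"
proof -
  have b: "\<And>x. phiL x \<in> {0..1} \<and> phiU x \<in> {0..1}" and le: "\<And>x. phiL x \<le> phiU x"
    using fp unfolding fence_pair_def by auto
  have gr: "fence phiL phiU \<subseteq> closure {(x, phiU x) | x. True}"
    using sc unfolding scissorhand_def by auto
  define M where "M = {r. \<exists>V. open V \<and> V \<noteq> {} \<and> V \<subseteq> U \<and> (\<forall>y\<in>V. r \<le> phiU y)}"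
  have "\<forall>y\<in>U. 0 \<le> phiU y" using b by auto
  then have "0 \<in> M" unfolding M_def using U by blast
  have bdd: "bdd_above M"
    unfolding M_def bdd_above_def
  proof (intro exI[of _ 1] ballI)
    fix r assume "r \<in> {r. \<exists>V. open V \<and> V \<noteq> {} \<and> V \<subseteq> U \<and> (\<forall>y\<in>V. r \<le> phiU y)}"
    then obtain V y where "y \<in> V" "\<forall>y\<in>V. r \<le> phiU y" by auto
    then show "r \<le> 1" using b[of y] by force
  qed
  define m where "m = Sup M"
  have "m - e/4 < m" using e by simp
  then obtain r where "r \<in> M" "m - e/4 < r"
    unfolding m_def using less_cSup_iff[of M "m - e/4"] \<open>0 \<in> M\<close> bdd m_def by auto
  then obtain V where V: "open V" "V \<noteq> {}" "V \<subseteq> U" "\<And>y. y \<in> V \<Longrightarrow> r \<le> phiU y"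
    unfolding M_def by auto
  have "m + e/4 \<notin> M"
  proof
    assume "m + e/4 \<in> M"
    then have "m + e/4 \<le> m" unfolding m_def using cSup_upper bdd by blast
    then show False using e by simp
  qed
  then have "\<not> (\<forall>y\<in>V. m + e/4 \<le> phiU y)" unfolding M_def using V by blast
  then obtain x where x: "x \<in> V" "phiU x < m + e/4" by (auto simp: not_le)
  show ?thesis
  proof (rule bexI[of _ x])
    show "x \<in> U" using x V by auto
    show "phiU x - phiL x < e"
    proof (rule ccontr)
      assume "\<not> ?thesis"
      then have h: "phiL x \<le> phiU x - e" by simp
      have "(x, phiL x) \<in> fence phiL phiU" using b le unfolding fence_def by auto
      then have "(x, phiL x) \<in> closure {(x, phiU x) | x. True}" using gr by auto
      moreover have "open (V \<times> ball (phiL x) (e/4))" using V by (simp add: open_Times)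
      moreover have "(x, phiL x) \<in> V \<times> ball (phiL x) (e/4)" using x e by auto
      ultimately obtain q where "q \<in> {(x, phiU x) | x. True}" "q \<in> V \<times> ball (phiL x) (e/4)"
        using closure_meet by blast
      then obtain x' where "x' \<in> V" "dist (phiL x) (phiU x') < e/4" by auto
      then have "r \<le> phiU x'" "\<bar>phiL x - phiU x'\<bar> < e/4" using V by (auto simp: dist_real_def)
      then show False using h x \<open>m - e/4 < r\<close> by linarith
    qed
  qed
qed

lemma closure_UNIV_meet:
  assumes "closure S = UNIV" "open U" "x \<in> U"
  shows "\<exists>y\<in>U. y \<in> S"
  using closure_meet[of x S U] assms by auto

theorem proposition2p7:
  fixes phiL phiU :: "cantor \<Rightarrow> real"
  assumes "fence_pair phiL phiU"
  shows "(scissorhand phiL phiU \<longrightarrow>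
            (let D1 = {x. \<exists>y. fence_at phiL phiU x = {y}} in
               gdelta_in euclidean D1 \<and> closure D1 = UNIV))
       \<and> (two_sided_scissorhand phiL phiU \<longrightarrow>
            (let D2 = {(x, y). (x, y) \<in> fence phiL phiU \<and> fence_at phiL phiU x = {y}} in
               gdelta_in (subtopology euclidean (fence phiL phiU)) D2 \<and>
               fence phiL phiU \<subseteq> closure D2))"
proof -
  have fp: "fence_pair phiL phiU" by fact
  have b: "\<And>x. phiL x \<in> {0..1} \<and> phiU x \<in> {0..1}" and le: "\<And>x. phiL x \<le> phiU x"
    and usc: "\<And>a. open {x. phiU x < a}" and lsc: "\<And>a. open {x. a < phiL x}"
    using fp unfolding fence_pair_def lower_semicont_def upper_semicont_def by auto
  define Op where "Op = (\<lambda>n::nat. {x. phiU x - phiL x < 1 / real (Suc n)})"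
  have Oopen: "open (Op n)" for n unfolding Op_def using open_O[OF fp] by blast
  have D1eq: "{x. \<exists>y. fence_at phiL phiU x = {y}} = \<Inter>(range Op)"
  proof -
    have "phiL x = phiU x \<longleftrightarrow> (\<forall>n. phiU x - phiL x < 1 / real (Suc n))" for x
    proof
      assume "\<forall>n. phiU x - phiL x < 1 / real (Suc n)"
      then have "\<not> (phiU x - phiL x > 0)"
        by (metis add.commute less_asym nat_approx_posE one_add_one plus_1_eq_Suc)
      then show "phiL x = phiU x" using le[of x] by simp
    qed simp
    then show ?thesis unfolding D1_eq[OF fp] Op_def by auto
  qed
  have gd1: "gdelta_in euclidean (\<Inter>(range Op))"
    by (rule gdelta_in_Inter) (auto intro!: open_imp_gdelta_in simp: Oopen)
  have dense1: "closure (\<Inter>(range Op)) = UNIV" if sc: "scissorhand phiL phiU"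
  proof (rule cantor_baire)
    fix T assume "T \<in> range Op"
    then obtain n where T: "T = Op n" by auto
    have "closure (Op n) = UNIV"
    proof (rule ccontr)
      assume "closure (Op n) \<noteq> UNIV"
      then obtain x where "x \<notin> closure (Op n)" by auto
      then obtain S where S: "open S" "x \<in> S" "Op n \<inter> S = {}"
        using closure_iff_nhds_not_empty by blast
      then obtain y where "y \<in> S" "phiU y - phiL y < 1 / real (Suc n)"
        using dense_O[OF fp sc, of "1 / real (Suc n)" S x] by auto
      then show False using S unfolding Op_def by auto
    qed
    then show "open T \<and> closure T = UNIV" using T Oopen by auto
  qed auto
  show ?thesis
  proof (intro conjI impI)
    assume "scissorhand phiL phiU"
    then show "let D1 = {x. \<exists>y. fence_at phiL phiU x = {y}} in
               gdelta_in euclidean D1 \<and> closure D1 = UNIV"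
      using D1eq gd1 dense1 by simp
  next
    assume ts: "two_sided_scissorhand phiL phiU"
    then have sc: "scissorhand phiL phiU" unfolding two_sided_scissorhand_def by auto
    have grU: "fence phiL phiU \<subseteq> closure {(x, phiU x) | x. True}"
      using sc unfolding scissorhand_def by auto
    have grL: "fence phiL phiU \<subseteq> closure {(x, phiL x) | x. True}"
      using ts unfolding two_sided_scissorhand_def by auto
    define D2 where "D2 = {(x, y). (x, y) \<in> fence phiL phiU \<and> fence_at phiL phiU x = {y}}"
    have Oeq: "\<Inter>(range Op) = {x. phiL x = phiU x}" using D1eq D1_eq[OF fp] by simp
    have D2eq: "D2 = (\<Inter>(range Op) \<times> UNIV) \<inter> fence phiL phiU"
    proof (rule set_eqI)
      fix p :: "cantor \<times> real"
      obtain x y where p: "p = (x, y)" by (cases p)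
      show "p \<in> D2 \<longleftrightarrow> p \<in> (\<Inter>(range Op) \<times> UNIV) \<inter> fence phiL phiU"
        unfolding D2_def Oeq fence_at_eq[OF fp] p
        by (auto simp: atLeastAtMost_singleton_iff fence_def)
    qed
    have "gdelta_in euclidean (\<Inter>(range Op) \<times> (UNIV :: real set))"
    proof -
      have "\<Inter>(range Op) \<times> (UNIV :: real set) = \<Inter>(range (\<lambda>n. Op n \<times> UNIV))" by auto
      moreover have "gdelta_in euclidean (\<Inter>(range (\<lambda>n. Op n \<times> (UNIV :: real set))))"
        by (rule gdelta_in_Inter) (auto intro!: open_imp_gdelta_in open_Times simp: Oopen)
      ultimately show ?thesis by simp
    qed
    then have gd2: "gdelta_in (subtopology euclidean (fence phiL phiU)) D2"
      unfolding gdelta_in_subtopology D2eq by blast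
    have dd: "fence phiL phiU \<subseteq> closure D2"
    proof
      fix p assume p: "p \<in> fence phiL phiU"
      obtain x t where pxt: "p = (x, t)" by (cases p)
      show "p \<in> closure D2"
        unfolding closure_iff_nhds_not_empty
      proof (intro allI impI)
        fix A S assume SA: "S \<subseteq> A" and oS: "open S" and pS: "p \<in> S"
        obtain U B where UB: "open U" "open B" "(x, t) \<in> U \<times> B" "U \<times> B \<subseteq> S"
          using open_prod_elim[OF oS pS] pxt by metis
        obtain d where d: "d > 0" "ball t d \<subseteq> B"
          using UB open_contains_ball by blast
        have "open (U \<times> ball t (d/2))" using UB by (simp add: open_Times)
        moreover have "(x, t) \<in> U \<times> ball t (d/2)" using UB d by auto
        ultimately obtain q where "q \<in> {(x, phiU x) | x. True}" "q \<in> U \<times> ball t (d/2)"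
          using closure_meet[of "(x,t)"] grU p pxt by blast
        then obtain x1 where x1: "x1 \<in> U" "\<bar>t - phiU x1\<bar> < d/2"
          by (auto simp: dist_real_def)
        define V1 where "V1 = U \<inter> {y. phiU y < t + d/2}"
        have oV1: "open V1" unfolding V1_def using UB usc by blast
        have x1V1: "x1 \<in> V1" unfolding V1_def using x1 by (auto simp: abs_if split: if_splits)
        have "(x1, phiU x1) \<in> fence phiL phiU" using b le unfolding fence_def by auto
        moreover have "open (V1 \<times> ball (phiU x1) (d/2))" using oV1 by (simp add: open_Times)
        moreover have "(x1, phiU x1) \<in> V1 \<times> ball (phiU x1) (d/2)" using x1V1 d by auto
        ultimately obtain q2 where "q2 \<in> {(x, phiL x) | x. True}" "q2 \<in> V1 \<times> ball (phiU x1) (d/2)"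
          using closure_meet[of "(x1, phiU x1)"] grL by blast
        then obtain x2 where x2: "x2 \<in> V1" "\<bar>phiU x1 - phiL x2\<bar> < d/2"
          by (auto simp: dist_real_def)
        define V2 where "V2 = V1 \<inter> {y. t - d < phiL y}"
        have oV2: "open V2" unfolding V2_def using oV1 lsc by blast
        have x2V2: "x2 \<in> V2" unfolding V2_def using x2 x1 by (auto simp: abs_if split: if_splits)
        obtain z where z: "z \<in> V2" "z \<in> \<Inter>(range Op)"
          using closure_UNIV_meet[OF dense1[OF sc] oV2 x2V2] by blast
        have zeq: "z \<in> {x. \<exists>y. fence_at phiL phiU x = {y}}" using z D1eq by auto
        then have "phiL z = phiU z" using D1_eq[OF fp] by auto
        then have "(z, phiU z) \<in> D2" unfolding D2eq using z b unfolding fence_def by auto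
        moreover have "(z, phiU z) \<in> U \<times> ball t d"
          using z le[of z] unfolding V2_def V1_def by (auto simp: dist_real_def abs_if)
        ultimately show "D2 \<inter> A \<noteq> {}" using d UB SA by blast
      qed
    qed
    show "let D2 = {(x, y). (x, y) \<in> fence phiL phiU \<and> fence_at phiL phiU x = {y}} in
               gdelta_in (subtopology euclidean (fence phiL phiU)) D2 \<and>
               fence phiL phiU \<subseteq> closure D2"
      using gd2 dd unfolding D2_def by simp
  qed
qed

end
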